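(* Let $G$ be a factor-critical graph with at least $7$ vertices. If $G$ is an edge-stable equimatchable graph which is not a complete graph on an odd number of vertices, then there is an independent set $S$ with $|S|\ge 2$ such that every vertex of $S$ is adjacent to every vertex of $V(G)\setminus S$.
   Context: All graphs are finite and simple. A graph is equimatchable if all its maximal matchings have the same cardinality; an equimatchable graph $G$ is edge-stable if $G\setminus e$ (delete edge $e$, keep vertices) is equimatchable for every $e\in E(G)$. A graph $G$ is factor-critical if $G-v$ has a perfect matching for every $v\in V(G)$. *)

theory Defs
  imports Main
begin

definition graph :: "'a set \<Rightarrow> 'a set set \<Rightarrow> bool" where
  "graph V E \<longleftrightarrow> finite V \<and> (\<forall>e\<in>E. e \<subseteq> V \<and> card e = 2)"

definition adj :: "'a set set \<Rightarrow> 'a \<Rightarrow> 'a \<Rightarrow> bool" where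
  "adj E u v \<longleftrightarrow> {u, v} \<in> E"

definition matching :: "'a set set \<Rightarrow> 'a set set \<Rightarrow> bool" where
  "matching E M \<longleftrightarrow> M \<subseteq> E \<and> (\<forall>e1\<in>M. \<forall>e2\<in>M. e1 \<noteq> e2 \<longrightarrow> e1 \<inter> e2 = {})"

definition maximal_matching :: "'a set set \<Rightarrow> 'a set set \<Rightarrow> bool" where
  "maximal_matching E M \<longleftrightarrow> matching E M \<and> (\<forall>M'. matching E M' \<and> M \<subseteq> M' \<longrightarrow> M' = M)"

definition equimatchable :: "'a set set \<Rightarrow> bool" where
  "equimatchable E \<longleftrightarrow>
     (\<forall>M1 M2. maximal_matching E M1 \<and> maximal_matching E M2 \<longrightarrow> card M1 = card M2)"

definition edge_stable :: "'a set set \<Rightarrow> bool" where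
  "edge_stable E \<longleftrightarrow> equimatchable E \<and> (\<forall>e\<in>E. equimatchable (E - {e}))"

definition perfect_matching :: "'a set \<Rightarrow> 'a set set \<Rightarrow> 'a set set \<Rightarrow> bool" where
  "perfect_matching V E M \<longleftrightarrow> matching E M \<and> \<Union>M = V"

definition factor_critical :: "'a set \<Rightarrow> 'a set set \<Rightarrow> bool" where
  "factor_critical V E \<longleftrightarrow>
     (\<forall>v\<in>V. \<exists>M. perfect_matching (V - {v}) {e\<in>E. v \<notin> e} M)"

definition complete_graph :: "'a set \<Rightarrow> 'a set set \<Rightarrow> bool" where
  "complete_graph V E \<longleftrightarrow> E = {e. e \<subseteq> V \<and> card e = 2}"

definition independent_set :: "'a set \<Rightarrow> 'a set set \<Rightarrow> 'a set \<Rightarrow> bool" where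
  "independent_set V E S \<longleftrightarrow> S \<subseteq> V \<and> (\<forall>u\<in>S. \<forall>v\<in>S. \<not> adj E u v)"

end

theory Submission
  imports Defs
begin



lemma adj_sym: "adj E u v \<longleftrightarrow> adj E v u"
  by (simp add: adj_def insert_commute)

lemma matching_disj: "matching E M \<Longrightarrow> e1 \<in> M \<Longrightarrow> e2 \<in> M \<Longrightarrow> x \<in> e1 \<Longrightarrow> x \<in> e2 \<Longrightarrow> e1 = e2"
  unfolding matching_def by blast

definition mate :: "'a set set \<Rightarrow> 'a \<Rightarrow> 'a" where
  "mate M v = (THE w. {v,w} \<in> M)"

lemma mate_eq:
  assumes "matching E M" "{v,w} \<in> M" shows "mate M v = w"
  unfolding mate_def
proof (rule the_equality)
  show "{v,w} \<in> M" by fact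
  fix w' assume "{v,w'} \<in> M"
  then have "{v,w'} = {v,w}" using matching_disj[OF assms(1)] assms(2) by blast
  then show "w' = w" by (auto simp: doubleton_eq_iff)
qed

lemma mate:
  assumes "matching E M" "\<forall>e\<in>E. card e = 2" "v \<in> \<Union>M"
  shows "{v, mate M v} \<in> M" "mate M v \<noteq> v"
proof -
  obtain e where e: "e \<in> M" "v \<in> e" using assms(3) by blast
  have "card e = 2" using e assms(1,2) unfolding matching_def by blast
  then obtain x y where xy: "e = {x,y}" "x \<noteq> y" by (auto simp: card_2_iff)
  then obtain w where w: "e = {v,w}" "w \<noteq> v" using e(2) by (auto simp: insert_commute)
  have "mate M v = w" using mate_eq[OF assms(1)] w e(1) by blast
  then show "{v, mate M v} \<in> M" "mate M v \<noteq> v" using w e by auto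
qed

lemma mate_mate:
  assumes "matching E M" "\<forall>e\<in>E. card e = 2" "v \<in> \<Union>M"
  shows "mate M (mate M v) = v"
  using mate[OF assms] mate_eq[OF assms(1)] by (metis insert_commute)

lemma mate_in:
  assumes "matching E M" "\<forall>e\<in>E. card e = 2" "v \<in> \<Union>M"
  shows "mate M v \<in> \<Union>M"
  using mate[OF assms] by blast

lemma mate_adj:
  assumes "matching E M" "\<forall>e\<in>E. card e = 2" "v \<in> \<Union>M"
  shows "adj E v (mate M v)"
  using mate[OF assms] assms(1) unfolding matching_def adj_def by blast


lemma card_matching:
  assumes "matching E M" "\<forall>e\<in>E. card e = 2" "finite (\<Union>M)"
  shows "card (\<Union>M) = 2 * card M"
proof -
  have "M \<subseteq> Pow (\<Union>M)" by blast
  then have fM: "finite M" using assms(3) by (simp add: finite_subset)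
  have c2: "\<And>e. e \<in> M \<Longrightarrow> card e = 2" using assms(1,2) unfolding matching_def by blast
  have "card (\<Union>M) = sum card M"
    apply (rule card_Union_disjoint)
    using assms(1) unfolding matching_def pairwise_def disjnt_def apply blast
    using c2 by (metis card.infinite zero_neq_numeral)
  also have "\<dots> = sum (\<lambda>_. 2) M" using c2 by simp
  finally show ?thesis by simp
qed


lemma extend_maximal:
  assumes "finite E" "matching E M0"
  shows "\<exists>M. maximal_matching E M \<and> M0 \<subseteq> M"
proof -
  let ?A = "{M. matching E M \<and> M0 \<subseteq> M}"
  have "?A \<subseteq> Pow E" unfolding matching_def by blast
  then have "finite ?A" by (rule finite_subset) (simp add: assms(1))
  moreover have "?A \<noteq> {}" using assms(2) by blast
  ultimately obtain m where m: "m \<in> ?A" "\<forall>b\<in>?A. m \<le> b \<longrightarrow> m = b"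
    using finite_has_maximal[of ?A] by blast
  have "maximal_matching E m" unfolding maximal_matching_def
  proof (intro conjI allI impI)
    show "matching E m" using m(1) by simp
    fix M' assume h: "matching E M' \<and> m \<subseteq> M'"
    have "M0 \<subseteq> M'" using h m(1) by blast
    then have "M' \<in> ?A" using h by blast
    then show "M' = m" using m(2) h by blast
  qed
  then show ?thesis using m(1) by blast
qed

lemma swap:
  assumes M: "matching E M" and R: "R \<subseteq> M" and N: "matching E N" and s: "\<Union>N \<subseteq> \<Union>R \<union> (UNIV - \<Union>M)"
  shows "matching E ((M - R) \<union> N)" "\<Union>((M - R) \<union> N) = (\<Union>M - \<Union>R) \<union> \<Union>N"
proof -
  have d: "\<Union>(M - R) = \<Union>M - \<Union>R"
  proof
    show "\<Union>(M - R) \<subseteq> \<Union>M - \<Union>R"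
    proof
      fix x assume "x \<in> \<Union>(M - R)"
      then obtain e where e: "e \<in> M" "e \<notin> R" "x \<in> e" by blast
      have "x \<notin> \<Union>R"
      proof
        assume "x \<in> \<Union>R"
        then obtain f where f: "f \<in> R" "x \<in> f" by blast
        have "e = f" using matching_disj[OF M e(1) _ e(3) f(2)] f(1) R by blast
        then show False using e f by simp
      qed
      then show "x \<in> \<Union>M - \<Union>R" using e by blast
    qed
  qed blast
  have dis: "\<And>e f. e \<in> M - R \<Longrightarrow> f \<in> N \<Longrightarrow> e \<inter> f = {}"
  proof -
    fix e f assume e: "e \<in> M - R" and f: "f \<in> N"
    have "f \<subseteq> \<Union>R \<union> (UNIV - \<Union>M)" using s f by blast
    moreover have "e \<subseteq> \<Union>M - \<Union>R" using d e by blast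
    ultimately show "e \<inter> f = {}" by blast
  qed
  show "matching E ((M - R) \<union> N)" unfolding matching_def
  proof (intro conjI ballI impI)
    show "M - R \<union> N \<subseteq> E" using M N unfolding matching_def by blast
    fix e1 e2 assume e1: "e1 \<in> M - R \<union> N" and e2: "e2 \<in> M - R \<union> N" and ne: "e1 \<noteq> e2"
    show "e1 \<inter> e2 = {}"
    proof (cases "e1 \<in> N")
      case True
      then show ?thesis
      proof (cases "e2 \<in> N")
        case True then show ?thesis using \<open>e1 \<in> N\<close> N ne unfolding matching_def by blast
      next
        case False then show ?thesis using dis[of e2 e1] e2 True by blast
      qed
    next
      case False
      then have e1': "e1 \<in> M - R" using e1 by blast
      show ?thesis
      proof (cases "e2 \<in> N")
        case True then show ?thesis using dis[OF e1'] by blast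
      next
        case False then show ?thesis using e1' e2 M ne unfolding matching_def by blast
      qed
    qed
  qed
  show "\<Union>((M - R) \<union> N) = (\<Union>M - \<Union>R) \<union> \<Union>N" using d by (simp add: Union_Un_distrib)
qed

lemma matching0: "matching E {}" by (simp add: matching_def)

lemma matching1: "adj E p q \<Longrightarrow> matching E {{p,q}}"
  unfolding matching_def adj_def by simp

lemma matching2: "adj E p q \<Longrightarrow> adj E r s \<Longrightarrow> distinct [p,q,r,s] \<Longrightarrow> matching E {{p,q},{r,s}}"
  unfolding matching_def adj_def by (simp add: doubleton_eq_iff) blast

lemma matching3: "adj E p q \<Longrightarrow> adj E r s \<Longrightarrow> adj E t u \<Longrightarrow> distinct [p,q,r,s,t,u] \<Longrightarrow>
   matching E {{p,q},{r,s},{t,u}}"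
  unfolding matching_def adj_def by (simp add: doubleton_eq_iff) blast



lemma Q3:
  assumes G: "graph V E" and fc: "factor_critical V E" and es: "edge_stable E"
    and in3: "p \<in> V" "q \<in> V" "r \<in> V" and dist: "distinct [p,q,r]"
    and npq: "\<not> adj E p q" and npr: "\<not> adj E p r"
    and N: "matching E N" "\<Union>N = V - {p,q,r}"
  shows False
proof -
  have finV: "finite V" and Ee: "\<forall>e\<in>E. e \<subseteq> V \<and> card e = 2" using G unfolding graph_def by auto
  have c2: "\<forall>e\<in>E. card e = 2" using Ee by auto
  define E' where "E' = E - {{q,r}}"
  have eq': "equimatchable E'"
  proof (cases "{q,r} \<in> E")
    case True then show ?thesis using es unfolding edge_stable_def E'_def by blast
  next
    case False then have "E' = E" unfolding E'_def by blast
    then show ?thesis using es unfolding edge_stable_def by simp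
  qed
  have finE: "finite E" using Ee finV by (meson Pow_iff finite_Pow_iff finite_subset subsetI)
  have finE': "finite E'" using finE unfolding E'_def by simp
  have c2': "\<forall>e\<in>E'. card e = 2" using c2 unfolding E'_def by auto
  have NE': "matching E' N" using N dist unfolding matching_def E'_def by auto
  have Nmax: "maximal_matching E' N"
    unfolding maximal_matching_def
  proof (intro conjI allI impI)
    show "matching E' N" by fact
    fix N' assume h: "matching E' N' \<and> N \<subseteq> N'"
    show "N' = N"
    proof (rule ccontr)
      assume "N' \<noteq> N"
      then obtain e where e: "e \<in> N'" "e \<notin> N" using h by blast
      have eE: "e \<in> E" "e \<noteq> {q,r}" using e h unfolding matching_def E'_def by auto
      have "e \<inter> \<Union>N = {}"
      proof (rule ccontr)
        assume "e \<inter> \<Union>N \<noteq> {}"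
        then obtain v f where "v \<in> e" "v \<in> f" "f \<in> N" by blast
        then have "e = f" using matching_disj[of E' N' e f v] h e by blast
        then show False using e \<open>f \<in> N\<close> by simp
      qed
      then have sub: "e \<subseteq> {p,q,r}" using Ee eE N(2) by blast
      obtain x y where xy: "e = {x,y}" "x \<noteq> y" using c2 eE by (meson card_2_iff)
      have "x \<in> {p,q,r}" "y \<in> {p,q,r}" using sub xy by auto
      then show False using xy eE npq npr dist unfolding adj_def
        by (auto simp: insert_commute)
    qed
  qed
  obtain Mq where Mq: "perfect_matching (V - {q}) {e\<in>E. q \<notin> e} Mq"
    using fc in3 unfolding factor_critical_def by blast
  have MqE: "matching E' Mq" "\<Union>Mq = V - {q}"
    using Mq unfolding perfect_matching_def matching_def E'_def by auto
  obtain Mx where Mx: "maximal_matching E' Mx" "Mq \<subseteq> Mx"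
    using extend_maximal[OF finE' MqE(1)] by blast
  have "card Mx = card N" using eq' Mx Nmax unfolding equimatchable_def by blast
  moreover have "card Mq \<le> card Mx"
    using Mx finE' unfolding maximal_matching_def matching_def
    by (meson card_mono finite_subset)
  moreover have "card (\<Union>Mq) = 2 * card Mq"
    using card_matching[OF MqE(1) c2'] MqE(2) finV by simp
  moreover have "card (\<Union>N) = 2 * card N"
    using card_matching[OF NE' c2'] N(2) finV by simp
  moreover have "card (V - {q}) = card V - 1" using in3 finV by simp
  moreover have "card (V - {p,q,r}) = card V - 3" using in3 dist finV
    by (simp add: card_Diff_subset)
  moreover have "card V \<ge> 3"
  proof -
    have "card {p,q,r} = 3" using dist by simp
    then show ?thesis using in3 finV by (metis card_mono empty_subsetI insert_subset)
  qed
  ultimately show False using MqE(2) N(2) by simp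
qed



locale fcg =
  fixes V :: "'a set" and E :: "'a set set"
  assumes finV: "finite V"
    and Ee: "\<forall>e\<in>E. e \<subseteq> V \<and> card e = 2"
    and fc: "\<forall>v\<in>V. \<exists>M. matching E M \<and> \<Union>M = V - {v}"
    and Q: "\<And>p q r N. p \<in> V \<Longrightarrow> q \<in> V \<Longrightarrow> r \<in> V \<Longrightarrow> distinct [p,q,r] \<Longrightarrow>
              \<not> adj E p q \<Longrightarrow> \<not> adj E p r \<Longrightarrow> matching E N \<Longrightarrow> \<Union>N = V - {p,q,r} \<Longrightarrow> False"
    and big: "card V \<ge> 7"
begin

definition nb :: "'a \<Rightarrow> 'a set" where "nb u = {w\<in>V. w \<noteq> u \<and> \<not> adj E u w}"

lemma c2: "\<forall>e\<in>E. card e = 2" using Ee by auto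

lemma adj_V: "adj E u v \<Longrightarrow> u \<in> V \<and> v \<in> V"
  using Ee unfolding adj_def by blast

lemma not_adj_self: "\<not> adj E u u"
  using Ee unfolding adj_def by fastforce

lemma fin_nb: "finite (nb u)" unfolding nb_def using finV by simp

lemma nb_iff: "w \<in> nb u \<longleftrightarrow> w \<in> V \<and> w \<noteq> u \<and> \<not> adj E u w" unfolding nb_def by simp

lemma noPM:
  assumes M: "matching E M" "\<Union>M = V - {b}" and b: "b \<in> V"
    and R: "R \<subseteq> M" and Nn: "matching E Nn" "\<Union>Nn \<subseteq> \<Union>R \<union> {b}"
    and pqr: "p \<in> V" "q \<in> V" "r \<in> V" "distinct [p,q,r]" "\<not> adj E p q" "\<not> adj E p r"
    and eq: "(V - {b} - \<Union>R) \<union> \<Union>Nn = V - {p,q,r}"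
  shows False
proof -
  have s: "\<Union>Nn \<subseteq> \<Union>R \<union> (UNIV - \<Union>M)" using Nn(2) M(2) by blast
  note sw = swap[OF M(1) R Nn(1) s]
  show False using Q[OF pqr sw(1)] sw(2) M(2) eq by simp
qed

lemma case1:
  assumes b: "b \<in> V" and mx: "\<forall>v\<in>V. card (nb v) \<le> card (nb b)" and ne: "nb b \<noteq> {}"
    and cl: "\<forall>a1\<in>nb b. \<forall>a2\<in>nb b. a1 \<noteq> a2 \<longrightarrow> \<not> adj E a1 a2"
  shows "\<exists>S. independent_set V E S \<and> card S \<ge> 2 \<and> (\<forall>u\<in>S. \<forall>v\<in>V - S. adj E u v)"
proof -
  let ?S = "insert b (nb b)"
  have bn: "b \<notin> nb b" by (simp add: nb_iff)
  have ind: "\<forall>u\<in>?S. \<forall>v\<in>?S. \<not> adj E u v"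
  proof (intro ballI)
    fix u v assume u: "u \<in> ?S" and v: "v \<in> ?S"
    show "\<not> adj E u v"
    proof (cases "u = v")
      case True then show ?thesis using not_adj_self by simp
    next
      case False
      show ?thesis
      proof (cases "u = b")
        case True then show ?thesis using v False by (simp add: nb_iff)
      next
        case ub: False
        show ?thesis
        proof (cases "v = b")
          case True then show ?thesis using u ub by (simp add: nb_iff adj_sym)
        next
          case False then show ?thesis using u v ub cl \<open>u \<noteq> v\<close> by simp
        qed
      qed
    qed
  qed
  have SV: "?S \<subseteq> V" using b unfolding nb_def by blast
  have cS: "card ?S = card (nb b) + 1" using bn fin_nb by simp
  have "card (nb b) \<ge> 1" using ne fin_nb by (simp add: Suc_leI card_gt_0_iff)
  then have c2S: "card ?S \<ge> 2" using cS by simp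
  have comp: "\<forall>u\<in>?S. \<forall>v\<in>V - ?S. adj E u v"
  proof (intro ballI, rule ccontr)
    fix u v assume u: "u \<in> ?S" and v: "v \<in> V - ?S" and na: "\<not> adj E u v"
    have uV: "u \<in> V" using u SV by blast
    have sub: "insert v (?S - {u}) \<subseteq> nb u"
    proof
      fix w assume w: "w \<in> insert v (?S - {u})"
      show "w \<in> nb u"
      proof (cases "w = v")
        case True then show ?thesis using v u na unfolding nb_def by blast
      next
        case False
        then have "w \<in> ?S" "w \<noteq> u" using w by auto
        then show ?thesis using ind u SV unfolding nb_def by blast
      qed
    qed
    have fS: "finite ?S" using fin_nb by simp
    have "card (insert v (?S - {u})) \<le> card (nb u)" using fin_nb sub by (rule card_mono)
    moreover have "card (insert v (?S - {u})) = card ?S"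
    proof -
      have "v \<notin> ?S - {u}" using v by blast
      then have "card (insert v (?S - {u})) = Suc (card (?S - {u}))" using fS by simp
      also have "\<dots> = card ?S" by (rule card_Suc_Diff1[OF fS u])
      finally show ?thesis .
    qed
    moreover have "card (nb u) \<le> card (nb b)" using mx uV by blast
    ultimately show False using cS by linarith
  qed
  show ?thesis unfolding independent_set_def using ind SV c2S comp by blast
qed

lemma case2:
  assumes b: "b \<in> V" and mx: "\<forall>v\<in>V. card (nb v) \<le> card (nb b)"
    and a12: "a1 \<in> nb b" "a2 \<in> nb b" "a1 \<noteq> a2" "adj E a1 a2"
  shows "\<exists>S. independent_set V E S \<and> card S \<ge> 2 \<and> (\<forall>u\<in>S. \<forall>v\<in>V - S. adj E u v)"
proof -
  define A where "A = nb b"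
  define D where "D = card A"
  obtain M where M: "matching E M" "\<Union>M = V - {b}" using fc b by blast
  define m where "m = mate M"
  have UM: "\<And>y. y \<in> V \<Longrightarrow> y \<noteq> b \<Longrightarrow> y \<in> \<Union>M" using M(2) by blast
  have m1: "\<And>y. y \<in> V \<Longrightarrow> y \<noteq> b \<Longrightarrow> {y, m y} \<in> M"
    unfolding m_def using mate(1)[OF M(1) c2 UM] by blast
  have m2: "\<And>y. y \<in> V \<Longrightarrow> y \<noteq> b \<Longrightarrow> m y \<noteq> y"
    unfolding m_def using mate(2)[OF M(1) c2 UM] by blast
  have m34: "\<And>y. y \<in> V \<Longrightarrow> y \<noteq> b \<Longrightarrow> m y \<in> V \<and> m y \<noteq> b"
  proof -
    fix y assume "y \<in> V" "y \<noteq> b"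
    then have "m y \<in> \<Union>M" unfolding m_def using mate_in[OF M(1) c2 UM] by blast
    then show "m y \<in> V \<and> m y \<noteq> b" using M(2) by blast
  qed
  have m3: "\<And>y. y \<in> V \<Longrightarrow> y \<noteq> b \<Longrightarrow> m y \<in> V" using m34 by (rule conjunct1)
  have m4: "\<And>y. y \<in> V \<Longrightarrow> y \<noteq> b \<Longrightarrow> m y \<noteq> b" using m34 by (rule conjunct2)
  have m5: "\<And>y. y \<in> V \<Longrightarrow> y \<noteq> b \<Longrightarrow> m (m y) = y"
    unfolding m_def using mate_mate[OF M(1) c2 UM] by blast
  have m6: "\<And>y. y \<in> V \<Longrightarrow> y \<noteq> b \<Longrightarrow> adj E y (m y)"
    unfolding m_def using mate_adj[OF M(1) c2 UM] by blast
  have aV: "\<And>a. a \<in> A \<Longrightarrow> a \<in> V" unfolding A_def nb_def by blast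
  have ab: "\<And>a. a \<in> A \<Longrightarrow> a \<noteq> b" unfolding A_def nb_def by blast
  have nA: "\<And>a. a \<in> A \<Longrightarrow> \<not> adj E b a" unfolding A_def nb_def by blast
  have nA': "\<And>a. a \<in> A \<Longrightarrow> \<not> adj E a b"
  proof -
    fix a assume "a \<in> A" then have "\<not> adj E b a" by (rule nA)
    then show "\<not> adj E a b" using adj_sym[of E a b] by simp
  qed
  have badj: "\<And>y. y \<in> V \<Longrightarrow> y \<noteq> b \<Longrightarrow> y \<notin> A \<Longrightarrow> adj E b y"
    unfolding A_def nb_def by blast
  have finA: "finite A" unfolding A_def by (rule fin_nb)
  have mA: "\<And>a. a \<in> A \<Longrightarrow> m a \<notin> A"
  proof
    fix a assume a: "a \<in> A" and ma: "m a \<in> A"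
    note h = m1[OF aV[OF a] ab[OF a]] m2[OF aV[OF a] ab[OF a]]
    show False
      apply (rule noPM[OF M b, of "{{a, m a}}" "{}" b a "m a"])
      subgoal using h by simp
      subgoal by (rule matching0)
      subgoal by simp
      subgoal by (rule b)
      subgoal by (rule aV[OF a])
      subgoal by (rule aV[OF ma])
      subgoal using h ab[OF a] ab[OF ma] by auto
      subgoal by (rule nA[OF a])
      subgoal by (rule nA[OF ma])
      subgoal using b by blast
      done
  qed
  have F2: "\<And>a a'. a \<in> A \<Longrightarrow> a' \<in> A \<Longrightarrow> a \<noteq> a' \<Longrightarrow> \<not> adj E (m a) (m a')"
  proof
    fix a a' assume a: "a \<in> A" "a' \<in> A" "a \<noteq> a'" and ad: "adj E (m a) (m a')"
    note h = m1[OF aV[OF a(1)] ab[OF a(1)]] m2[OF aV[OF a(1)] ab[OF a(1)]]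
      m1[OF aV[OF a(2)] ab[OF a(2)]] m2[OF aV[OF a(2)] ab[OF a(2)]]
      m5[OF aV[OF a(1)] ab[OF a(1)]] m5[OF aV[OF a(2)] ab[OF a(2)]]
      m3[OF aV[OF a(1)] ab[OF a(1)]] m3[OF aV[OF a(2)] ab[OF a(2)]]
      m4[OF aV[OF a(1)] ab[OF a(1)]] m4[OF aV[OF a(2)] ab[OF a(2)]]
    have h2: "m a \<notin> A" "m a' \<notin> A" using mA a by auto
    have h3: "m a \<noteq> m a'" using h(5,6) a(3) by metis
    have h5: "m a \<noteq> a'" "m a' \<noteq> a" using h2 a by auto
    show False
      apply (rule noPM[OF M b, of "{{a, m a}, {a', m a'}}" "{{m a, m a'}}" b a a'])
      subgoal using h by simp
      subgoal by (rule matching1[OF ad])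
      subgoal by blast
      subgoal by (rule b)
      subgoal by (rule aV[OF a(1)])
      subgoal by (rule aV[OF a(2)])
      subgoal using ab a by auto
      subgoal by (rule nA[OF a(1)])
      subgoal by (rule nA[OF a(2)])
      subgoal using h h2 h3 h5 a b ab by auto
      done
  qed
  have minj: "inj_on m A"
  proof (rule inj_onI)
    fix x y assume "x \<in> A" "y \<in> A" "m x = m y"
    then show "x = y" using m5[OF aV ab] by metis
  qed
  define S where "S = m ` A"
  have cardS: "card S = D" unfolding S_def D_def using minj by (simp add: card_image)
  have SV: "S \<subseteq> V" unfolding S_def using m3 aV ab by blast
  have SA: "\<And>s. s \<in> S \<Longrightarrow> s \<notin> A" unfolding S_def using mA by blast
  have Sb: "b \<notin> S" unfolding S_def using m4 aV ab by blast
  have D2: "D \<ge> 2"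
  proof -
    have "{a1,a2} \<subseteq> A" using a12 unfolding A_def by blast
    then have "card {a1,a2} \<le> card A" using finA by (rule card_mono[rotated])
    then show ?thesis unfolding D_def using a12(3) by simp
  qed
  have mxD: "\<And>v. v \<in> V \<Longrightarrow> card (nb v) \<le> D" using mx unfolding D_def A_def by blast
  have cardV: "card V = 2 * card M + 1"
  proof -
    have "card (\<Union>M) = 2 * card M" using card_matching[OF M(1) c2] M(2) finV by simp
    moreover have "card (V - {b}) = card V - 1" using b finV by simp
    moreover have "card V \<ge> 1" using b finV by (metis One_nat_def Suc_leI card_gt_0_iff empty_iff)
    ultimately show ?thesis using M(2) by simp
  qed
  have ind: "\<forall>u\<in>S. \<forall>v\<in>S. \<not> adj E u v"
    unfolding S_def using F2 not_adj_self by blast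
  have comp: "\<forall>u\<in>S. \<forall>v\<in>V - S. adj E u v"
  proof (intro ballI, rule ccontr)
    fix c x assume c: "c \<in> S" and x: "x \<in> V - S" and na: "\<not> adj E c x"
    obtain ak where ak: "ak \<in> A" "c = m ak" using c unfolding S_def by blast
    have akV: "ak \<in> V" "ak \<noteq> b" using aV ab ak by auto
    have akh: "{ak, c} \<in> M" "c \<noteq> ak" "m c = ak" "adj E ak c" "c \<notin> A" "c \<in> V" "c \<noteq> b"
      using m1[OF akV] m2[OF akV] m5[OF akV] m6[OF akV] mA[OF ak(1)] m3[OF akV] m4[OF akV]
      unfolding ak(2) by auto
    have "adj E c b" using badj[OF akh(6) akh(7) akh(5)] adj_sym[of E c b] by simp
    then have xb: "x \<noteq> b" using na by blast
    have xV: "x \<in> V" "x \<notin> S" using x by auto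
    show False
    proof (cases "x \<in> A")
      case True
      define aj where "aj = x"
      have aj: "aj \<in> A" "\<not> adj E c aj" "\<not> adj E aj c" using True na adj_sym[of E x c] unfolding aj_def by simp_all
      have ajV: "aj \<in> V" "aj \<noteq> b" using aV ab aj by auto
      have ajk: "aj \<noteq> ak" using aj(3) akh(4) by blast
      have ajh: "{aj, m aj} \<in> M" "m aj \<noteq> aj" "m (m aj) = aj" "m aj \<notin> A" "m aj \<in> V" "m aj \<noteq> b"
        "adj E aj (m aj)"
        using m1[OF ajV] m2[OF ajV] m5[OF ajV] mA[OF aj(1)] m3[OF ajV] m4[OF ajV] m6[OF ajV] by auto
      have ajS: "m aj \<in> S" unfolding S_def using aj by blast
      have ajc: "m aj \<noteq> c" using minj ajk aj(1) ak unfolding inj_on_def by metis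
      have cmaj: "\<not> adj E c (m aj)" using F2[OF ak(1) aj(1) ajk[symmetric]] ak(2) by simp
      have cne: "c \<noteq> aj" "m aj \<noteq> ak" using akh(5) aj(1) ajh(4) ak(1) by auto
      have claim1: "\<And>y. y \<in> V \<Longrightarrow> y \<notin> S \<Longrightarrow> y \<noteq> b \<Longrightarrow> y \<noteq> aj \<Longrightarrow> y \<noteq> ak \<Longrightarrow> \<not> adj E ak y"
      proof
        fix y assume y: "y \<in> V" "y \<notin> S" "y \<noteq> b" "y \<noteq> aj" "y \<noteq> ak" and ay: "adj E ak y"
        define y' where "y' = m y"
        have yh: "{y, y'} \<in> M" "y' \<noteq> y" "m y' = y" "y' \<in> V" "y' \<noteq> b"
          using m1[OF y(1,3)] m2[OF y(1,3)] m5[OF y(1,3)] m3[OF y(1,3)] m4[OF y(1,3)]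
          unfolding y'_def by auto
        have y'A: "y' \<notin> A"
        proof
          assume "y' \<in> A" then have "m y' \<in> S" unfolding S_def by blast
          then show False using yh(3) y(2) by simp
        qed
        have y'ne: "y' \<noteq> m aj" "y' \<noteq> c" using yh(3) ajh(3) akh(3) y(4,5) by metis+
        have yne: "y \<noteq> m aj" "y \<noteq> c" using y(2) ajS c by auto
        have by': "adj E b y'" using badj[OF yh(4) yh(5) y'A] .
        have y'ne2: "y' \<noteq> aj" "y' \<noteq> ak" using y'A aj(1) ak(1) by auto
        show False
          apply (rule noPM[OF M b, of "{{aj, m aj}, {ak, c}, {y, y'}}" "{{ak, y}, {b, y'}}" c aj "m aj"])
          subgoal using ajh(1) akh(1) yh(1) by simp
          subgoal apply (rule matching2[OF ay by']) using y(3,5) yh(2,5) y'ne2 akV(2) by auto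
          subgoal by blast
          subgoal by (rule akh(6))
          subgoal by (rule ajV(1))
          subgoal by (rule ajh(5))
          subgoal using cne ajc ajh(2) by auto
          subgoal using aj(2) .
          subgoal using cmaj .
          subgoal using y yh y'ne y'ne2 yne cne ajc ajh ajV akV akh b ajk by auto
          done
      qed
      have T0: "V - S - {aj, ak} \<subseteq> nb ak"
      proof
        fix y assume y: "y \<in> V - S - {aj, ak}"
        show "y \<in> nb ak"
        proof (cases "y = b")
          case True then show ?thesis using nA'[OF ak(1)] y unfolding nb_def by blast
        next
          case False then show ?thesis using claim1[of y] y unfolding nb_def by blast
        qed
      qed
      have akS: "ak \<notin> S" "aj \<notin> S" using SA ak(1) aj(1) by blast+
      have cT0: "card (V - S - {aj, ak}) = card V - D - 2"
      proof -
        have "card (V - S) = card V - D" using SV finV cardS by (simp add: card_Diff_subset finite_subset)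
        moreover have "{aj, ak} \<subseteq> V - S" using ajV akV akS by blast
        moreover have "card {aj, ak} = 2" using ajk by simp
        ultimately show ?thesis using finV by (simp add: card_Diff_subset)
      qed
      have le1: "card V - D - 2 \<le> D"
      proof -
        have "card (V - S - {aj, ak}) \<le> card (nb ak)" using T0 fin_nb by (rule card_mono[rotated])
        then show ?thesis using cT0 mxD[OF akV(1)] by simp
      qed
      have le2: "2 * D + 1 \<le> card V"
      proof -
        have sub: "insert b (A \<union> S) \<subseteq> V" using b aV SV by blast
        have fS: "finite S" using SV finV finite_subset by blast
        have "A \<inter> S = {}" using SA by blast
        then have "card (A \<union> S) = D + D" using finA fS cardS D_def by (simp add: card_Un_disjoint)
        moreover have "b \<notin> A \<union> S" using Sb ab by blast
        ultimately have "card (insert b (A \<union> S)) = 2 * D + 1" using finA fS by simp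
        then show ?thesis using sub finV card_mono by metis
      qed
      have cV: "card V = 2 * D + 1" using le1 le2 cardV by presburger
      have D3: "D \<ge> 3" using cV big by linarith
      have ajb: "\<not> adj E aj b" using nA'[OF aj(1)] .
      have i: "\<not> adj E (m aj) ak"
      proof
        assume h: "adj E (m aj) ak"
        show False
          apply (rule noPM[OF M b, of "{{aj, m aj}, {ak, c}}" "{{m aj, ak}}" aj b c])
          subgoal using ajh(1) akh(1) by simp
          subgoal by (rule matching1[OF h])
          subgoal by blast
          subgoal by (rule ajV(1))
          subgoal by (rule b)
          subgoal by (rule akh(6))
          subgoal using ajV(2) cne akh(7) by auto
          subgoal by (rule ajb)
          subgoal by (rule aj(3))
          subgoal using cne ajc ajh ajV akV akh b ajk by auto
          done
      qed
      define T where "T = insert (m aj) (V - S - {aj, ak})"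
      have TN: "T \<subseteq> nb ak"
      proof -
        have "\<not> adj E ak (m aj)" using i adj_sym[of E ak "m aj"] by simp
        then have "m aj \<in> nb ak" using ajh(5) cne(2) unfolding nb_def by blast
        then show ?thesis unfolding T_def using T0 by blast
      qed
      have cT: "card T = D" unfolding T_def using cT0 cV ajS finV D2 by simp
      have Teq: "T = nb ak"
        using TN cT mxD[OF akV(1)] fin_nb by (metis card_seteq)
      have ii: "\<And>am. am \<in> A \<Longrightarrow> am \<noteq> aj \<Longrightarrow> am \<noteq> ak \<Longrightarrow> \<not> adj E (m aj) am"
      proof
        fix am assume am: "am \<in> A" "am \<noteq> aj" "am \<noteq> ak" and h: "adj E (m aj) am"
        have amV: "am \<in> V" "am \<noteq> b" using aV ab am by auto
        have amh: "{am, m am} \<in> M" "m am \<noteq> am" "m am \<notin> A" "m am \<in> V" "m am \<noteq> b"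
          using m1[OF amV] m2[OF amV] mA[OF am(1)] m3[OF amV] m4[OF amV] by auto
        have amS: "m am \<in> S" unfolding S_def using am by blast
        have amne: "m am \<noteq> m aj" "m am \<noteq> c" using minj am aj(1) ak unfolding inj_on_def by metis+
        have "m am \<notin> nb ak" using Teq amS amne(1) unfolding T_def by blast
        moreover have "m am \<noteq> ak" using amh(3) ak(1) by blast
        ultimately have h2: "adj E ak (m am)" using amh(4) unfolding nb_def by blast
        have ne3: "m aj \<noteq> am" "am \<noteq> ak" "m am \<noteq> ak" "m aj \<noteq> ak"
          using ajh(4) am amh(3) ak(1) by auto
        show False
          apply (rule noPM[OF M b, of "{{aj, m aj}, {ak, c}, {am, m am}}" "{{m aj, am}, {ak, m am}}" aj b c])
          subgoal using ajh(1) akh(1) amh(1) by simp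
          subgoal apply (rule matching2[OF h h2]) using ne3 amne amh(2) by auto
          subgoal by blast
          subgoal by (rule ajV(1))
          subgoal by (rule b)
          subgoal by (rule akh(6))
          subgoal using ajV(2) cne akh(7) by auto
          subgoal by (rule ajb)
          subgoal by (rule aj(3))
          subgoal using cne ajc ajh ajV akV akh b ajk amh amV amne ne3 am aj(1) ak(1) by auto
          done
      qed
      have W: "(A - {aj}) \<union> (S - {m aj}) \<subseteq> nb (m aj)"
      proof
        fix w assume w: "w \<in> (A - {aj}) \<union> (S - {m aj})"
        show "w \<in> nb (m aj)"
        proof (cases "w \<in> A")
          case True
          have "\<not> adj E (m aj) w"
          proof (cases "w = ak")
            case True then show ?thesis using i by simp
          next
            case False
            have "w \<notin> S" using SA \<open>w \<in> A\<close> by blast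
            then have "w \<noteq> aj" using w by blast
            then show ?thesis using ii[OF \<open>w \<in> A\<close> _ False] by blast
          qed
          moreover have "w \<noteq> m aj" using True ajh(4) by blast
          ultimately show ?thesis using aV[OF True] unfolding nb_def by blast
        next
          case False
          then obtain a where a: "a \<in> A" "w = m a" "a \<noteq> aj" using w unfolding S_def by blast
          have "\<not> adj E (m aj) w" using F2[OF aj(1) a(1)] a(2,3) by metis
          moreover have "w \<noteq> m aj" using w False by blast
          moreover have "w \<in> V" using w SV False by blast
          ultimately show ?thesis unfolding nb_def by blast
        qed
      qed
      have fS: "finite S" using SV finV finite_subset by blast
      have "card ((A - {aj}) \<union> (S - {m aj})) = (D - 1) + (D - 1)"
      proof -
        have "(A - {aj}) \<inter> (S - {m aj}) = {}" using SA by blast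
        moreover have "card (A - {aj}) = D - 1" using aj(1) finA D_def by simp
        moreover have "card (S - {m aj}) = D - 1" using ajS fS cardS by simp
        ultimately show ?thesis using finA fS by (simp add: card_Un_disjoint)
      qed
      moreover have "card ((A - {aj}) \<union> (S - {m aj})) \<le> D"
      proof -
        have "card ((A - {aj}) \<union> (S - {m aj})) \<le> card (nb (m aj))" using W fin_nb by (rule card_mono[rotated])
        then show ?thesis using mxD[OF ajh(5)] by simp
      qed
      ultimately show False using D3 by linarith
    next
      case False
      define x' where "x' = m x"
      have xh: "{x, x'} \<in> M" "x' \<noteq> x" "m x' = x" "x' \<in> V" "x' \<noteq> b"
        using m1[OF xV(1) xb] m2[OF xV(1) xb] m5[OF xV(1) xb] m3[OF xV(1) xb] m4[OF xV(1) xb]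
        unfolding x'_def by auto
      have x'A: "x' \<notin> A"
      proof
        assume "x' \<in> A" then have "m x' \<in> S" unfolding S_def by blast
        then show False using xh(3) xV(2) by simp
      qed
      have x'S: "x' \<notin> S"
      proof
        assume "x' \<in> S" then obtain a where a: "a \<in> A" "x' = m a" unfolding S_def by blast
        then have "x = a" using xh(3) m5[OF aV[OF a(1)] ab[OF a(1)]] by simp
        then show False using False a(1) by simp
      qed
      have bx': "adj E b x'" using badj[OF xh(4) xh(5) x'A] .
      have xne: "x \<noteq> c" using xV(2) c by auto
      have cx: "\<not> adj E c x" by fact
      have x'ne: "x' \<noteq> c" "x' \<noteq> ak" "x \<noteq> ak" using x'S c x'A ak(1) False by auto
      show False
      proof (cases "\<exists>aj\<in>A. aj \<noteq> ak \<and> adj E ak aj")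
        case True
        then obtain aj where aj: "aj \<in> A" "aj \<noteq> ak" "adj E ak aj" by blast
        have ajV: "aj \<in> V" "aj \<noteq> b" using aV ab aj by auto
        have ajh: "{aj, m aj} \<in> M" "m aj \<noteq> aj" "m aj \<notin> A" "m aj \<in> V" "m aj \<noteq> b"
          using m1[OF ajV] m2[OF ajV] mA[OF aj(1)] m3[OF ajV] m4[OF ajV] by auto
        have ajS: "m aj \<in> S" unfolding S_def using aj by blast
        have ajc: "m aj \<noteq> c" using minj aj ak unfolding inj_on_def by metis
        have cmaj: "\<not> adj E c (m aj)" using F2[OF ak(1) aj(1) aj(2)[symmetric]] ak(2) by simp
        have ne4: "x \<noteq> m aj" "x' \<noteq> m aj" "x \<noteq> aj" "x' \<noteq> aj" "c \<noteq> aj" "m aj \<noteq> ak"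
          using xV(2) ajS x'S False aj(1) x'A akh(5) ajh(3) ak(1) by auto
        show False
          apply (rule noPM[OF M b, of "{{ak, c}, {aj, m aj}, {x, x'}}" "{{ak, aj}, {b, x'}}" c x "m aj"])
          subgoal using ajh(1) akh(1) xh(1) by simp
          subgoal apply (rule matching2[OF aj(3) bx']) using aj(2) akV(2) x'ne ajV(2) xh(5) ne4 by auto
          subgoal by blast
          subgoal by (rule akh(6))
          subgoal by (rule xV(1))
          subgoal by (rule ajh(4))
          subgoal using xne ajc ne4 by auto
          subgoal by (rule cx)
          subgoal by (rule cmaj)
          subgoal using xh ne4 x'ne xne ajc ajh ajV akV akh b aj xV xb by auto
          done
      next
        case nf: False
        have sub: "insert b (A - {ak}) \<subseteq> nb ak"
        proof
          fix w assume w: "w \<in> insert b (A - {ak})"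
          show "w \<in> nb ak"
          proof (cases "w = b")
            case True then show ?thesis using nA'[OF ak(1)] b akV(2) unfolding nb_def by blast
          next
            case False then show ?thesis using nf w aV unfolding nb_def by blast
          qed
        qed
        have bA: "b \<notin> A - {ak}" using ab by blast
        have "card (insert b (A - {ak})) = D" using ak(1) bA finA D2 D_def by simp
        then have nbeq: "nb ak = insert b (A - {ak})"
          using sub mxD[OF akV(1)] fin_nb by (metis card_seteq)
        have a1A: "a1 \<in> A" "a2 \<in> A" using a12 unfolding A_def by auto
        have a1k: "a1 \<noteq> ak" "a2 \<noteq> ak"
        proof -
          show "a1 \<noteq> ak"
          proof
            assume "a1 = ak"
            then show False using nf a12(3,4) a1A(2) by auto
          qed
          show "a2 \<noteq> ak"
          proof
            assume "a2 = ak"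
            then have "adj E ak a1" using a12(4) adj_sym[of E a1 a2] by simp
            then show False using nf a12(3) a1A(1) \<open>a2 = ak\<close> by auto
          qed
        qed
        have a1V: "a1 \<in> V" "a1 \<noteq> b" "a2 \<in> V" "a2 \<noteq> b" using aV ab a1A by auto
        have a1h: "{a1, m a1} \<in> M" "m a1 \<notin> A" "m a1 \<in> V" "m a1 \<noteq> b" "m a1 \<noteq> a1"
          using m1[OF a1V(1,2)] mA[OF a1A(1)] m3[OF a1V(1,2)] m4[OF a1V(1,2)] m2[OF a1V(1,2)] by auto
        have a2h: "{a2, m a2} \<in> M" "m a2 \<notin> A" "m a2 \<in> V" "m a2 \<noteq> b" "m a2 \<noteq> a2"
          using m1[OF a1V(3,4)] mA[OF a1A(2)] m3[OF a1V(3,4)] m4[OF a1V(3,4)] m2[OF a1V(3,4)] by auto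
        have a1S: "m a1 \<in> S" "m a2 \<in> S" unfolding S_def using a1A by blast+
        have mne: "m a1 \<noteq> m a2" "m a1 \<noteq> c" "m a2 \<noteq> c"
          using minj a1A a12(3) a1k ak unfolding inj_on_def by metis+
        have akx': "adj E ak x'"
        proof -
          have "x' \<notin> nb ak" using nbeq xh(5) x'A by blast
          then show ?thesis using xh(4) x'ne(2) unfolding nb_def by blast
        qed
        have ba2: "adj E b (m a2)" using badj[OF a2h(3) a2h(4) a2h(2)] .
        have cma1: "\<not> adj E c (m a1)" using F2[OF ak(1) a1A(1) a1k(1)[symmetric]] ak(2) by simp
        have ne5: "x \<noteq> m a1" "x \<noteq> m a2" "x' \<noteq> m a1" "x' \<noteq> m a2" "x \<noteq> a1" "x \<noteq> a2"
          "x' \<noteq> a1" "x' \<noteq> a2" "c \<noteq> a1" "c \<noteq> a2" "m a1 \<noteq> ak" "m a2 \<noteq> ak" "m a1 \<noteq> a2" "m a2 \<noteq> a1"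
          using xV(2) a1S x'S False a1A x'A akh(5) a1h(2) a2h(2) ak(1) by auto
        show False
          apply (rule noPM[OF M b, of "{{ak, c}, {a1, m a1}, {x, x'}, {a2, m a2}}"
                "{{a1, a2}, {ak, x'}, {b, m a2}}" c x "m a1"])
          subgoal using a1h(1) a2h(1) akh(1) xh(1) by simp
          subgoal apply (rule matching3[OF a12(4) akx' ba2])
            using a12(3) a1k a1V x'ne ne5 xh(5) akV(2) a2h by auto
          subgoal by blast
          subgoal by (rule akh(6))
          subgoal by (rule xV(1))
          subgoal by (rule a1h(3))
          subgoal using xne mne ne5 by auto
          subgoal by (rule cx)
          subgoal by (rule cma1)
          subgoal using xh ne5 x'ne xne mne a1h a2h a1V akV akh b xV xb a12(3) a1k by auto
          done
      qed
    qed
  qed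
  show ?thesis unfolding independent_set_def using ind SV comp cardS D2 by auto
qed


lemma main:
  assumes nc: "\<exists>u\<in>V. \<exists>v\<in>V. u \<noteq> v \<and> \<not> adj E u v"
  shows "\<exists>S. independent_set V E S \<and> card S \<ge> 2 \<and> (\<forall>u\<in>S. \<forall>v\<in>V - S. adj E u v)"
proof -
  obtain u v where uv: "u \<in> V" "v \<in> V" "u \<noteq> v" "\<not> adj E u v" using nc by blast
  define f where "f = (\<lambda>w. card (nb w))"
  have ne: "f ` V \<noteq> {}" using uv by blast
  have fi: "finite (f ` V)" using finV by simp
  obtain b where b: "b \<in> V" "f b = Max (f ` V)" using Max_in[OF fi ne] by force
  have mx: "\<forall>w\<in>V. card (nb w) \<le> card (nb b)"
  proof
    fix w assume "w \<in> V"
    then have "f w \<le> Max (f ` V)" using Max_ge[OF fi] by blast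
    then show "card (nb w) \<le> card (nb b)" using b(2) unfolding f_def by simp
  qed
  have "v \<in> nb u" using uv unfolding nb_def by blast
  then have "card (nb u) \<ge> 1" using fin_nb by (metis One_nat_def Suc_leI card_gt_0_iff empty_iff)
  then have "card (nb b) \<ge> 1" using mx uv(1) by (meson le_trans)
  then have nbne: "nb b \<noteq> {}" by auto
  show ?thesis
  proof (cases "\<forall>a1\<in>nb b. \<forall>a2\<in>nb b. a1 \<noteq> a2 \<longrightarrow> \<not> adj E a1 a2")
    case True
    then show ?thesis using case1[OF b(1) mx nbne] by blast
  next
    case False
    then obtain a1 a2 where "a1 \<in> nb b" "a2 \<in> nb b" "a1 \<noteq> a2" "adj E a1 a2" by blast
    then show ?thesis using case2[OF b(1) mx] by blast
  qed
qed

end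

theorem lemma3p4:
  fixes V :: "'a set" and E :: "'a set set"
  assumes "graph V E"
    and "factor_critical V E"
    and "card V \<ge> 7"
    and "edge_stable E"
    and "\<not> (complete_graph V E \<and> odd (card V))"
  shows "\<exists>S. independent_set V E S \<and> card S \<ge> 2 \<and>
           (\<forall>u\<in>S. \<forall>v\<in>V - S. adj E u v)"
proof -
  have finV: "finite V" and Ee: "\<forall>e\<in>E. e \<subseteq> V \<and> card e = 2" using assms(1) unfolding graph_def by auto
  have fc: "\<forall>v\<in>V. \<exists>M. matching E M \<and> \<Union>M = V - {v}"
  proof
    fix v assume "v \<in> V"
    then obtain M where "perfect_matching (V - {v}) {e\<in>E. v \<notin> e} M"
      using assms(2) unfolding factor_critical_def by blast
    then have "matching E M \<and> \<Union>M = V - {v}" unfolding perfect_matching_def matching_def by blast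
    then show "\<exists>M. matching E M \<and> \<Union>M = V - {v}" by blast
  qed
  interpret fcg V E
  proof
    show "finite V" by fact
    show "\<forall>e\<in>E. e \<subseteq> V \<and> card e = 2" by fact
    show "\<forall>v\<in>V. \<exists>M. matching E M \<and> \<Union>M = V - {v}" by fact
    show "card V \<ge> 7" by fact
    fix p q r N
    assume "p \<in> V" "q \<in> V" "r \<in> V" "distinct [p, q, r]" "\<not> adj E p q" "\<not> adj E p r"
      "matching E N" "\<Union>N = V - {p, q, r}"
    then show False using Q3[OF assms(1,2,4)] by blast
  qed
  have odd: "odd (card V)"
  proof -
    have "V \<noteq> {}" using assms(3) by auto
    then obtain v where v: "v \<in> V" by blast
    then obtain M where M: "matching E M" "\<Union>M = V - {v}" using fc by blast
    have "card (\<Union>M) = 2 * card M" using card_matching[OF M(1) c2] M(2) finV by simp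
    moreover have "card (V - {v}) = card V - 1" using v finV by simp
    moreover have "card V \<ge> 1" using assms(3) by simp
    ultimately have "card V - 1 = 2 * card M" "card V \<ge> 1" using M(2) by simp_all
    then show ?thesis by presburger
  qed
  have nc: "\<exists>u\<in>V. \<exists>v\<in>V. u \<noteq> v \<and> \<not> adj E u v"
  proof (rule ccontr)
    assume h: "\<not> ?thesis"
    have "complete_graph V E" unfolding complete_graph_def
    proof
      show "E \<subseteq> {e. e \<subseteq> V \<and> card e = 2}" using Ee by blast
      show "{e. e \<subseteq> V \<and> card e = 2} \<subseteq> E"
      proof
        fix e assume e: "e \<in> {e. e \<subseteq> V \<and> card e = 2}"
        then obtain x y where xy: "e = {x, y}" "x \<noteq> y" by (auto simp: card_2_iff)
        then have "x \<in> V" "y \<in> V" using e by auto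
        then have "adj E x y" using h xy by blast
        then show "e \<in> E" using xy unfolding adj_def by simp
      qed
    qed
    then show False using assms(5) odd by blast
  qed
  show ?thesis by (rule main[OF nc])
qed

end
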